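(* Endow $\mathbb{R}^{t+1}$ with the inner product $(x,y)=\sum_{i=1}^{t+1}b^ix_iy_i$, where $b^1,\dots,b^{t+1}$ are positive integers, and let $\overline{\mathcal C}=\{x\in\mathbb{R}^{t+1}:x_1\le\cdots\le x_{t+1}\}$. Let $v\in\mathbb{R}^{t+1}\setminus\{0\}$ with $\sum_i v_ib^i=0$, and define $\mu_v(\Gamma)=(\Gamma,v)/\|\Gamma\|$ on $\overline{\mathcal C}\setminus\{0\}$. Assume some $\Gamma\in\overline{\mathcal C}$ has $\mu_v(\Gamma)>0$. Let $b_0=0$, $b_i=b^1+\dots+b^i$, $w_0=0$, $w_i=-\sum_{k\le i}b^kv_k$ (so $w_{t+1}=0$), let $(b_i,\widetilde w_i)$ be the points of the convex envelope (least concave majorant) of the piecewise linear graph through the points $(b_i,w_i)$, $i=0,\dots,t+1$, and define $\Gamma_v=(\Gamma_1,\dots,\Gamma_{t+1})$ by $\Gamma_i=-(\widetilde w_i-\widetilde w_{i-1})/b^i$. Then $\Gamma_v\in\overline{\mathcal C}\setminus\{0\}$ and $\Gamma_v$ attains the maximum of $\mu_v$ on $\overline{\mathcal C}\setminus\{0\}$. *)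

theory Defs
  imports "HOL-Analysis.Analysis"
begin

text \<open>Vectors in R^(t+1) are represented as functions nat => real, of which only the
coordinates 1..t+1 matter. The weights b^1,...,b^(t+1) are given by bw :: nat => nat.\<close>

definition ip :: "nat \<Rightarrow> (nat \<Rightarrow> nat) \<Rightarrow> (nat \<Rightarrow> real) \<Rightarrow> (nat \<Rightarrow> real) \<Rightarrow> real" where
  "ip t bw x y = (\<Sum>i=1..t+1. real (bw i) * x i * y i)"

definition wnorm :: "nat \<Rightarrow> (nat \<Rightarrow> nat) \<Rightarrow> (nat \<Rightarrow> real) \<Rightarrow> real" where
  "wnorm t bw x = sqrt (ip t bw x x)"

definition cone :: "nat \<Rightarrow> (nat \<Rightarrow> real) set" where
  "cone t = {x. \<forall>i\<in>{1..t}. x i \<le> x (i+1)}"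

definition nonzero_vec :: "nat \<Rightarrow> (nat \<Rightarrow> real) \<Rightarrow> bool" where
  "nonzero_vec t x \<longleftrightarrow> (\<exists>i\<in>{1..t+1}. x i \<noteq> 0)"

definition mu :: "nat \<Rightarrow> (nat \<Rightarrow> nat) \<Rightarrow> (nat \<Rightarrow> real) \<Rightarrow> (nat \<Rightarrow> real) \<Rightarrow> real" where
  "mu t bw v G = ip t bw G v / wnorm t bw G"

definition bs :: "(nat \<Rightarrow> nat) \<Rightarrow> nat \<Rightarrow> real" where
  "bs bw i = (\<Sum>k=1..i. real (bw k))"

definition ws :: "(nat \<Rightarrow> nat) \<Rightarrow> (nat \<Rightarrow> real) \<Rightarrow> nat \<Rightarrow> real" where
  "ws bw v i = - (\<Sum>k=1..i. real (bw k) * v k)"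

definition plin :: "(nat \<Rightarrow> nat) \<Rightarrow> (nat \<Rightarrow> real) \<Rightarrow> real \<Rightarrow> real" where
  "plin bw v s = (let i = (LEAST i. s \<le> bs bw i) in
      if i = 0 then ws bw v 0
      else ws bw v (i-1) + (ws bw v i - ws bw v (i-1)) * (s - bs bw (i-1)) / (bs bw i - bs bw (i-1)))"

definition concave_env :: "nat \<Rightarrow> (nat \<Rightarrow> nat) \<Rightarrow> (nat \<Rightarrow> real) \<Rightarrow> real \<Rightarrow> real" where
  "concave_env t bw v s = Inf {h s | h. concave_on {0..bs bw (t+1)} h \<and>
       (\<forall>r\<in>{0..bs bw (t+1)}. plin bw v r \<le> h r)}"

definition wt :: "nat \<Rightarrow> (nat \<Rightarrow> nat) \<Rightarrow> (nat \<Rightarrow> real) \<Rightarrow> nat \<Rightarrow> real" where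
  "wt t bw v i = concave_env t bw v (bs bw i)"

definition Gamma_v :: "nat \<Rightarrow> (nat \<Rightarrow> nat) \<Rightarrow> (nat \<Rightarrow> real) \<Rightarrow> nat \<Rightarrow> real" where
  "Gamma_v t bw v i = - (wt t bw v i - wt t bw v (i-1)) / real (bw i)"

end

theory Submission
  imports Defs
begin

lemma bs_0[simp]: "bs bw 0 = 0" by (simp add: bs_def)
lemma bs_Suc: "bs bw (Suc i) = bs bw i + real (bw (Suc i))"
  by (simp add: bs_def)
lemma ws_0[simp]: "ws bw v 0 = 0" by (simp add: ws_def)
lemma ws_Suc: "ws bw v (Suc i) = ws bw v i - real (bw (Suc i)) * v (Suc i)"
  by (simp add: ws_def)

lemma bs_mono_le: "i \<le> j \<Longrightarrow> bs bw i \<le> bs bw j"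
  by (induction j rule: dec_induct) (auto simp: bs_Suc)

lemma bs_strict:
  assumes bpos: "\<forall>i\<in>{1..n}. bw i > 0" and "i < j" "j \<le> n"
  shows "bs bw i < bs bw j"
proof -
  have "bw (Suc i) > 0" using bpos assms by auto
  then have "bs bw i < bs bw (Suc i)" by (simp add: bs_Suc)
  also have "\<dots> \<le> bs bw j" using assms by (intro bs_mono_le) auto
  finally show ?thesis .
qed

definition sl :: "(nat \<Rightarrow> nat) \<Rightarrow> (nat \<Rightarrow> real) \<Rightarrow> nat \<Rightarrow> real" where
  "sl bw y i = (y i - y (i-1)) / real (bw i)"

definition lin :: "(nat \<Rightarrow> nat) \<Rightarrow> (nat \<Rightarrow> real) \<Rightarrow> nat \<Rightarrow> real \<Rightarrow> real" where
  "lin bw y i s = y (i-1) + sl bw y i * (s - bs bw (i-1))"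

definition PP :: "nat \<Rightarrow> (nat \<Rightarrow> nat) \<Rightarrow> (nat \<Rightarrow> real) \<Rightarrow> real \<Rightarrow> real" where
  "PP t bw y s = Min ((\<lambda>i. lin bw y i s) ` {1..t+1})"

lemma sl_mono:
  assumes cons: "\<forall>j\<in>{1..t}. sl bw y (j+1) \<le> sl bw y j"
    and "1 \<le> j" "j \<le> k" "k \<le> t+1"
  shows "sl bw y k \<le> sl bw y j"
  using assms(3,4)
proof (induction k rule: dec_induct)
  case base then show ?case by simp
next
  case (step m)
  then have "sl bw y (m+1) \<le> sl bw y m" using cons assms(2) by auto
  then show ?case using step by simp
qed

lemma y_step:
  assumes "bw (Suc k) > 0"
  shows "y (Suc k) = y k + sl bw y (Suc k) * real (bw (Suc k))"
  using assms by (simp add: sl_def)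

lemma lin_ge:
  assumes bpos: "\<forall>i\<in>{1..t+1}. bw i > 0"
    and cons: "\<forall>j\<in>{1..t}. sl bw y (j+1) \<le> sl bw y j"
    and i: "1 \<le> i" "i \<le> t+1" and k: "k \<le> t+1"
  shows "y k \<le> lin bw y i (bs bw k)"
proof (cases "i - 1 \<le> k")
  case True
  then show ?thesis using k
  proof (induction k rule: dec_induct)
    case base then show ?case by (simp add: lin_def)
  next
    case (step m)
    have b: "bw (Suc m) > 0" using bpos step by auto
    have s: "sl bw y (Suc m) \<le> sl bw y i"
      using sl_mono[OF cons, of i "Suc m"] i step by auto
    have "lin bw y i (bs bw (Suc m)) = lin bw y i (bs bw m) + sl bw y i * real (bw (Suc m))"
      by (simp add: lin_def bs_Suc algebra_simps)
    moreover have "y (Suc m) = y m + sl bw y (Suc m) * real (bw (Suc m))"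
      using b by (simp add: sl_def)
    moreover have "sl bw y (Suc m) * real (bw (Suc m)) \<le> sl bw y i * real (bw (Suc m))"
      using s by (simp add: mult_right_mono)
    ultimately show ?case using step by simp
  qed
next
  case False
  then have "k \<le> i - 1" by simp
  then show ?thesis
  proof (induction k rule: inc_induct)
    case base then show ?case by (simp add: lin_def)
  next
    case (step m)
    have b: "bw (Suc m) > 0" using bpos step i by auto
    have s: "sl bw y i \<le> sl bw y (Suc m)"
      using sl_mono[OF cons, of "Suc m" i] i step by auto
    have "lin bw y i (bs bw (Suc m)) = lin bw y i (bs bw m) + sl bw y i * real (bw (Suc m))"
      by (simp add: lin_def bs_Suc algebra_simps)
    moreover have "y (Suc m) = y m + sl bw y (Suc m) * real (bw (Suc m))"
      using b by (simp add: sl_def)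
    moreover have "sl bw y i * real (bw (Suc m)) \<le> sl bw y (Suc m) * real (bw (Suc m))"
      using s by (simp add: mult_right_mono)
    ultimately show ?case using step by simp
  qed
qed

lemma PP_knot:
  assumes bpos: "\<forall>i\<in>{1..t+1}. bw i > 0"
    and cons: "\<forall>j\<in>{1..t}. sl bw y (j+1) \<le> sl bw y j"
    and k: "k \<le> t+1"
  shows "PP t bw y (bs bw k) = y k"
proof -
  have ge: "\<forall>x\<in>(\<lambda>i. lin bw y i (bs bw k)) ` {1..t+1}. y k \<le> x"
    using lin_ge[OF bpos cons _ _ k] by auto
  have mem: "y k \<in> (\<lambda>i. lin bw y i (bs bw k)) ` {1..t+1}"
  proof (cases k)
    case 0 then show ?thesis
      by (intro image_eqI[of _ _ 1]) (auto simp: lin_def)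
  next
    case (Suc m)
    have "bw k > 0" using bpos Suc k by auto
    then have "lin bw y k (bs bw k) = y k" using Suc
      by (simp add: lin_def sl_def bs_Suc)
    then show ?thesis using Suc k by (intro image_eqI[of _ _ k]) auto
  qed
  show ?thesis unfolding PP_def
    by (rule antisym) (use ge mem in \<open>auto intro: Min_le\<close>)
qed

lemma PP_concave: "concave_on {a..b} (PP t bw y)"
  unfolding concave_on_iff
proof (intro conjI ballI allI impI)
  show "convex {a..b}" by simp
  fix x z :: real and u w :: real
  assume "u \<ge> 0" "w \<ge> 0" "u + w = 1"
  have ne: "(\<lambda>i. lin bw y i s) ` {1..t+1} \<noteq> {}" for s by auto
  have "u * PP t bw y x + w * PP t bw y z \<le> lin bw y i (u *\<^sub>R x + w *\<^sub>R z)"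
    if "i \<in> {1..t+1}" for i
  proof -
    have "PP t bw y x \<le> lin bw y i x" "PP t bw y z \<le> lin bw y i z"
      unfolding PP_def using that by (auto intro!: Min_le)
    then have "u * PP t bw y x + w * PP t bw y z \<le> u * lin bw y i x + w * lin bw y i z"
      using \<open>u \<ge> 0\<close> \<open>w \<ge> 0\<close> by (intro add_mono mult_left_mono)
    also have "\<dots> = lin bw y i (u *\<^sub>R x + w *\<^sub>R z)"
      proof -
      have w: "w = 1 - u" using \<open>u + w = 1\<close> by simp
      show ?thesis unfolding lin_def w by (simp add: algebra_simps)
    qed
    finally show ?thesis .
  qed
  then show "u * PP t bw y x + w * PP t bw y z \<le> PP t bw y (u *\<^sub>R x + w *\<^sub>R z)"
    unfolding PP_def by (subst Min_ge_iff) auto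
qed

lemma lin_affine:
  assumes "a \<noteq> b"
  shows "lin bw y i r = (1 - (r - a) / (b - a)) * lin bw y i a + ((r - a) / (b - a)) * lin bw y i b"
proof -
  have d: "b - a \<noteq> 0" using assms by simp
  define th where "th = (r - a) / (b - a)"
  have e: "th * (b - a) = r - a" unfolding th_def using d by simp
  have "(1 - th) * lin bw y i a + th * lin bw y i b
      = y (i-1) + sl bw y i * (a - bs bw (i-1) + th * (b - a))"
    unfolding lin_def by (simp add: algebra_simps)
  also have "\<dots> = lin bw y i r" unfolding e lin_def by simp
  finally show ?thesis unfolding th_def by simp
qed

lemma plin_le_PP:
  assumes bpos: "\<forall>i\<in>{1..t+1}. bw i > 0"
    and cons: "\<forall>j\<in>{1..t}. sl bw y (j+1) \<le> sl bw y j"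
    and wle: "\<forall>j\<le>t+1. ws bw v j \<le> y j"
    and r: "r \<in> {0..bs bw (t+1)}"
  shows "plin bw v r \<le> PP t bw y r"
proof (cases "r = 0")
  case True
  have "(LEAST i. (0::real) \<le> bs bw i) = 0" by (rule Least_eq_0) simp
  then have "plin bw v r = ws bw v 0" using True by (simp add: plin_def)
  also have "\<dots> \<le> y 0" using wle by auto
  also have "\<dots> = PP t bw y (bs bw 0)" using PP_knot[OF bpos cons, of 0] by simp
  finally show ?thesis using True by simp
next
  case False
  then have r0: "r > 0" using r by auto
  define k where "k = (LEAST i. r \<le> bs bw i)"
  have rk: "r \<le> bs bw k" unfolding k_def by (rule LeastI[of _ "t+1"]) (use r in auto)
  have kle: "k \<le> t+1" unfolding k_def by (rule Least_le) (use r in auto)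
  have k0: "k \<noteq> 0"
  proof
    assume "k = 0" then show False using rk r0 by simp
  qed
  have rk1: "bs bw (k-1) < r" using not_less_Least[of "k-1" "\<lambda>i. r \<le> bs bw i"] k0
    unfolding k_def[symmetric] by linarith
  have bk: "bs bw (k-1) < bs bw k" using rk1 rk by linarith
  define a where "a = bs bw (k-1)"
  define b where "b = bs bw k"
  define th where "th = (r - a) / (b - a)"
  have ar: "a < r" "r \<le> b" "a < b" using rk rk1 bk unfolding a_def b_def by auto
  have th0: "0 \<le> th" "th \<le> 1" unfolding th_def using ar by (auto simp: divide_le_eq)
  have pl: "plin bw v r = (1 - th) * ws bw v (k-1) + th * ws bw v k"
  proof -
    have "plin bw v r = ws bw v (k-1) + (ws bw v k - ws bw v (k-1)) * (r - a) / (b - a)"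
      unfolding plin_def Let_def k_def[symmetric] a_def b_def using k0 by simp
    also have "\<dots> = ws bw v (k-1) + th * (ws bw v k - ws bw v (k-1))"
      unfolding th_def by simp
    also have "\<dots> = (1 - th) * ws bw v (k-1) + th * ws bw v k" by (simp add: algebra_simps)
    finally show ?thesis .
  qed
  have "plin bw v r \<le> lin bw y i r" if i: "i \<in> {1..t+1}" for i
  proof -
    have w1: "ws bw v (k-1) \<le> y (k-1)" "ws bw v k \<le> y k" using wle kle by auto
    have l1: "y (k-1) \<le> lin bw y i a" "y k \<le> lin bw y i b"
      unfolding a_def b_def using lin_ge[OF bpos cons] i kle by auto
    have th1: "0 \<le> 1 - th" using th0 by simp
    have "plin bw v r \<le> (1 - th) * y (k-1) + th * y k"
      unfolding pl using w1 th0(1) th1 by (intro add_mono mult_left_mono)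
    also have "\<dots> \<le> (1 - th) * lin bw y i a + th * lin bw y i b"
      using l1 th0(1) th1 by (intro add_mono mult_left_mono)
    also have "\<dots> = lin bw y i r" unfolding th_def using lin_affine[of a b bw y i r] ar by simp
    finally show ?thesis .
  qed
  then show ?thesis unfolding PP_def by (subst Min_ge_iff) auto
qed

definition cm :: "nat \<Rightarrow> (nat \<Rightarrow> nat) \<Rightarrow> (nat \<Rightarrow> real) \<Rightarrow> (real \<Rightarrow> real) \<Rightarrow> bool" where
  "cm t bw v h \<longleftrightarrow> concave_on {0..bs bw (t+1)} h \<and> (\<forall>r\<in>{0..bs bw (t+1)}. plin bw v r \<le> h r)"

lemma env_eq: "concave_env t bw v s = Inf {h s | h. cm t bw v h}"
  unfolding concave_env_def cm_def by simp

lemma PP_cm: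
  assumes bpos: "\<forall>i\<in>{1..t+1}. bw i > 0"
    and cons: "\<forall>j\<in>{1..t}. sl bw y (j+1) \<le> sl bw y j"
    and wle: "\<forall>j\<le>t+1. ws bw v j \<le> y j"
  shows "cm t bw v (PP t bw y)"
  unfolding cm_def using PP_concave plin_le_PP[OF bpos cons wle] by blast

lemma exists_cm:
  assumes bpos: "\<forall>i\<in>{1..t+1}. bw i > 0"
  shows "\<exists>h. cm t bw v h"
proof -
  define M where "M = (\<Sum>j\<le>t+1. \<bar>ws bw v j\<bar>)"
  have "ws bw v j \<le> M" if "j \<le> t+1" for j
  proof -
    have "ws bw v j \<le> \<bar>ws bw v j\<bar>" by simp
    also have "\<dots> \<le> M" unfolding M_def using that
      by (intro member_le_sum) auto
    finally show ?thesis .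
  qed
  moreover have "\<forall>j\<in>{1..t}. sl bw (\<lambda>_. M) (j+1) \<le> sl bw (\<lambda>_. M) j" by (simp add: sl_def)
  ultimately show ?thesis using PP_cm[OF bpos, of "\<lambda>_. M" v] by auto
qed

lemma bs_in:
  assumes "k \<le> t+1" shows "bs bw k \<in> {0..bs bw (t+1)}"
  using bs_mono_le[of 0 k bw] bs_mono_le[OF assms, of bw] by simp

lemma env_ge:
  assumes bpos: "\<forall>i\<in>{1..t+1}. bw i > 0" and s: "s \<in> {0..bs bw (t+1)}"
  shows "plin bw v s \<le> concave_env t bw v s"
  unfolding env_eq
  by (rule cInf_greatest) (use exists_cm[OF bpos, of v] s in \<open>auto simp: cm_def\<close>)

lemma env_le:
  assumes h: "cm t bw v h" and s: "s \<in> {0..bs bw (t+1)}"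
  shows "concave_env t bw v s \<le> h s"
  unfolding env_eq
proof (rule cInf_lower)
  show "h s \<in> {h s |h. cm t bw v h}" using h by blast
  show "bdd_below {h s |h. cm t bw v h}"
    by (rule bdd_belowI[of _ "plin bw v s"]) (use s in \<open>auto simp: cm_def\<close>)
qed

lemma wt_le_y:
  assumes bpos: "\<forall>i\<in>{1..t+1}. bw i > 0"
    and cons: "\<forall>j\<in>{1..t}. sl bw y (j+1) \<le> sl bw y j"
    and wle: "\<forall>j\<le>t+1. ws bw v j \<le> y j"
    and k: "k \<le> t+1"
  shows "wt t bw v k \<le> y k"
  unfolding wt_def
  using env_le[OF PP_cm[OF bpos cons wle] bs_in[OF k]] PP_knot[OF bpos cons k] by simp

lemma ws_le_wt:
  assumes bpos: "\<forall>i\<in>{1..t+1}. bw i > 0" and k: "k \<le> t+1"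
  shows "ws bw v k \<le> wt t bw v k"
proof -
  have "plin bw v (bs bw k) = ws bw v k"
  proof (cases k)
    case 0
    have "(LEAST i. (0::real) \<le> bs bw i) = 0" by (rule Least_eq_0) simp
    then show ?thesis using 0 by (simp add: plin_def)
  next
    case (Suc m)
    have L: "(LEAST i. bs bw k \<le> bs bw i) = k"
    proof (rule Least_equality)
      fix j assume "bs bw k \<le> bs bw j"
      show "k \<le> j"
      proof (rule ccontr)
        assume "\<not> k \<le> j"
        then have "bs bw j < bs bw k" using bs_strict[OF bpos, of j k] k by simp
        then show False using \<open>bs bw k \<le> bs bw j\<close> by simp
      qed
    qed simp
    have "bs bw m < bs bw (Suc m)" using bs_strict[OF bpos, of m "Suc m"] Suc k by simp
    then show ?thesis unfolding plin_def Let_def L using Suc by simp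
  qed
  then show ?thesis unfolding wt_def using env_ge[where v=v, OF bpos bs_in[OF k]] by simp
qed

lemma env_concave3:
  assumes a: "a \<in> {0..bs bw (t+1)}" and c: "c \<in> {0..bs bw (t+1)}"
    and p: "p > 0" and q: "q > 0" and b: "b = a + p" and cb: "c = b + q"
    and bpos: "\<forall>i\<in>{1..t+1}. bw i > 0"
  shows "p * (concave_env t bw v c - concave_env t bw v b) \<le> q * (concave_env t bw v b - concave_env t bw v a)"
proof -
  define th where "th = p / (p + q)"
  have th: "0 \<le> th" "th \<le> 1" using p q unfolding th_def by auto
  have bb: "(1 - th) *\<^sub>R a + th *\<^sub>R c = b"
  proof -
    have "(1 - th) *\<^sub>R a + th *\<^sub>R c = a + th * (c - a)" by (simp add: algebra_simps)
    also have "th * (c - a) = p" unfolding th_def using p q b cb by (simp add: field_simps)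
    finally show ?thesis using b by simp
  qed
  have bin: "b \<in> {0..bs bw (t+1)}" using a c b cb p q by auto
  let ?e = "concave_env t bw v"
  have "(1 - th) * ?e a + th * ?e c \<le> ?e b"
    unfolding env_eq[of t bw v b]
  proof (rule cInf_greatest)
    show "{h b |h. cm t bw v h} \<noteq> {}" using exists_cm[OF bpos, of v] by auto
    fix x assume "x \<in> {h b |h. cm t bw v h}"
    then obtain h where h: "cm t bw v h" and x: "x = h b" by auto
    have "(1 - th) * ?e a + th * ?e c \<le> (1 - th) * h a + th * h c"
      using env_le[OF h a] env_le[OF h c] th by (intro add_mono mult_left_mono) auto
    also have "\<dots> \<le> h ((1 - th) *\<^sub>R a + th *\<^sub>R c)"
    proof -
      have hc: "concave_on {0..bs bw (t+1)} h" using h unfolding cm_def by simp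
      show ?thesis by (rule concave_onD[OF hc th a c])
    qed
    finally show "(1 - th) * ?e a + th * ?e c \<le> x" using x bb by simp
  qed
  then have "(p + q) * ((1 - th) * ?e a + th * ?e c) \<le> (p + q) * ?e b"
    using p q by (intro mult_left_mono) auto
  moreover have "(p + q) * ((1 - th) * ?e a + th * ?e c) = q * ?e a + p * ?e c"
  proof -
    have e1: "(p + q) * th = p" unfolding th_def using p q by simp
    have e2: "(p + q) * (1 - th) = q" using e1 by (simp add: algebra_simps)
    have "(p + q) * ((1 - th) * ?e a + th * ?e c) = ((p + q) * (1 - th)) * ?e a + ((p + q) * th) * ?e c"
      by (simp add: algebra_simps)
    then show ?thesis unfolding e1 e2 .
  qed
  ultimately have "q * ?e a + p * ?e c \<le> (p + q) * ?e b" by simp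
  then show ?thesis by (simp add: algebra_simps)
qed

lemma wt_cons:
  assumes bpos: "\<forall>i\<in>{1..t+1}. bw i > 0"
  shows "\<forall>j\<in>{1..t}. sl bw (wt t bw v) (j+1) \<le> sl bw (wt t bw v) j"
proof
  fix j assume j: "j \<in> {1..t}"
  define p where "p = real (bw j)"
  define q where "q = real (bw (j+1))"
  have p: "p > 0" and q: "q > 0" using bpos j unfolding p_def q_def by auto
  obtain m where m: "j = Suc m" using j by (cases j) auto
  have bj: "bs bw j = bs bw (j-1) + p" unfolding p_def m by (simp add: bs_Suc)
  have bj1: "bs bw (j+1) = bs bw j + q" unfolding q_def by (simp add: bs_Suc)
  have "p * (wt t bw v (j+1) - wt t bw v j) \<le> q * (wt t bw v j - wt t bw v (j-1))"
    unfolding wt_def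
    by (rule env_concave3[OF bs_in bs_in p q bj bj1 bpos]) (use j in auto)
  then have "(wt t bw v (j+1) - wt t bw v j) / q \<le> (wt t bw v j - wt t bw v (j-1)) / p"
    using p q by (simp add: divide_simps mult.commute)
  then show "sl bw (wt t bw v) (j+1) \<le> sl bw (wt t bw v) j"
    unfolding sl_def p_def q_def by simp
qed

lemma sl_le: "y k \<le> z k \<Longrightarrow> z (k-1) \<le> y (k-1) \<Longrightarrow> sl bw y k \<le> sl bw z k"
  unfolding sl_def by (intro divide_right_mono) auto

lemma wt_0:
  assumes bpos: "\<forall>i\<in>{1..t+1}. bw i > 0"
  shows "wt t bw v 0 = 0"
proof -
  let ?z = "wt t bw v"
  define y where "y = ?z(0 := 0)"
  have z0: "0 \<le> ?z 0" using ws_le_wt[OF bpos, of 0 v] by simp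
  have cz: "\<forall>j\<in>{1..t}. sl bw ?z (j+1) \<le> sl bw ?z j" by (rule wt_cons[OF bpos])
  have "\<forall>j\<in>{1..t}. sl bw y (j+1) \<le> sl bw y j"
  proof
    fix j assume j: "j \<in> {1..t}"
    have "sl bw y (j+1) \<le> sl bw ?z (j+1)" using j by (intro sl_le) (auto simp: y_def)
    also have "\<dots> \<le> sl bw ?z j" using cz j by auto
    also have "\<dots> \<le> sl bw y j" using z0 j by (intro sl_le) (auto simp: y_def)
    finally show "sl bw y (j+1) \<le> sl bw y j" .
  qed
  moreover have "\<forall>j\<le>t+1. ws bw v j \<le> y j"
    using ws_le_wt[OF bpos] by (auto simp: y_def)
  ultimately have "?z 0 \<le> y 0" using wt_le_y[OF bpos] by blast
  then show ?thesis using z0 by (simp add: y_def)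
qed

lemma wt_last:
  assumes bpos: "\<forall>i\<in>{1..t+1}. bw i > 0"
  shows "wt t bw v (t+1) = ws bw v (t+1)"
proof -
  let ?z = "wt t bw v"
  define y where "y = ?z(t+1 := ws bw v (t+1))"
  have z0: "ws bw v (t+1) \<le> ?z (t+1)" using ws_le_wt[OF bpos, of "t+1" v] by simp
  have cz: "\<forall>j\<in>{1..t}. sl bw ?z (j+1) \<le> sl bw ?z j" by (rule wt_cons[OF bpos])
  have "\<forall>j\<in>{1..t}. sl bw y (j+1) \<le> sl bw y j"
  proof
    fix j assume j: "j \<in> {1..t}"
    have "sl bw y (j+1) \<le> sl bw ?z (j+1)" using j z0 by (intro sl_le) (auto simp: y_def)
    also have "\<dots> \<le> sl bw ?z j" using cz j by auto
    also have "\<dots> \<le> sl bw y j" using j by (intro sl_le) (auto simp: y_def)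
    finally show "sl bw y (j+1) \<le> sl bw y j" .
  qed
  moreover have "\<forall>j\<le>t+1. ws bw v j \<le> y j"
    using ws_le_wt[OF bpos] by (auto simp: y_def)
  ultimately have "?z (t+1) \<le> y (t+1)" using wt_le_y[OF bpos] by blast
  then show ?thesis using z0 by (simp add: y_def)
qed

lemma touch:
  assumes bpos: "\<forall>i\<in>{1..t+1}. bw i > 0"
    and j: "j \<in> {1..t}" and lt: "sl bw (wt t bw v) (j+1) < sl bw (wt t bw v) j"
  shows "wt t bw v j = ws bw v j"
proof (rule ccontr)
  let ?z = "wt t bw v"
  assume ne: "?z j \<noteq> ws bw v j"
  then have gt: "ws bw v j < ?z j" using ws_le_wt[OF bpos, of j v] j by auto
  define d where "d = min (?z j - ws bw v j) ((sl bw ?z j - sl bw ?z (j+1)) / 2)"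
  have d0: "d > 0" using gt lt unfolding d_def by auto
  define y where "y = ?z(j := ?z j - d)"
  have cz: "\<forall>j\<in>{1..t}. sl bw ?z (j+1) \<le> sl bw ?z j" by (rule wt_cons[OF bpos])
  have "bw j > 0" "bw (j+1) > 0" using bpos j by auto
  then have b1: "real (bw j) \<ge> 1" "real (bw (j+1)) \<ge> 1" by auto
  have "\<forall>i\<in>{1..t}. sl bw y (i+1) \<le> sl bw y i"
  proof
    fix i assume i: "i \<in> {1..t}"
    show "sl bw y (i+1) \<le> sl bw y i"
    proof (cases "i = j")
      case True
      have e1: "sl bw y (j+1) = sl bw ?z (j+1) + d / real (bw (j+1))"
        unfolding sl_def y_def using b1 by (simp add: field_simps)
      have e2: "sl bw y j = sl bw ?z j - d / real (bw j)"
      proof -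
        have jj: "j - 1 \<noteq> j" using j by auto
        show ?thesis unfolding sl_def y_def using b1 jj by (simp add: field_simps)
      qed
      have f1: "d / real (bw (j+1)) \<le> d" "d / real (bw j) \<le> d"
        using b1 d0 by (auto simp: divide_le_eq)
      have f2: "d \<le> (sl bw ?z j - sl bw ?z (j+1)) / 2" unfolding d_def by (rule min.cobounded2)
      have f3: "2 * d \<le> sl bw ?z j - sl bw ?z (j+1)" using f2 by (simp add: field_simps)
      show ?thesis unfolding True e1 e2 using f1 f3 by linarith
    next
      case False
      have "sl bw y (i+1) \<le> sl bw ?z (i+1)" using False d0 by (intro sl_le) (auto simp: y_def)
      also have "\<dots> \<le> sl bw ?z i" using cz i by auto
      also have "\<dots> \<le> sl bw y i" using False d0 by (intro sl_le) (auto simp: y_def)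
      finally show ?thesis .
    qed
  qed
  moreover have "\<forall>k\<le>t+1. ws bw v k \<le> y k"
    using ws_le_wt[OF bpos] unfolding y_def d_def by auto
  ultimately have "?z j \<le> y j" using wt_le_y[OF bpos] j by auto
  then show False using d0 by (simp add: y_def)
qed

lemma abel:
  fixes t :: nat and X z :: "nat \<Rightarrow> real"
  shows "(\<Sum>i=1..t+1. X i * (z (i-1) - z i)) =
     z 0 * X 1 - z (t+1) * X (t+1) + (\<Sum>i=1..t. z i * (X (i+1) - X i))"
proof (induction t)
  case 0 then show ?case by (simp add: algebra_simps)
next
  case (Suc t)
  have "(\<Sum>i=1..Suc t+1. X i * (z (i-1) - z i)) = (\<Sum>i=1..t+1. X i * (z (i-1) - z i)) + X (t+2) * (z (t+1) - z (t+2))"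
    by simp
  also have "\<dots> = z 0 * X 1 - z (Suc t+1) * X (Suc t+1) + (\<Sum>i=1..Suc t. z i * (X (i+1) - X i))"
    unfolding Suc by (simp add: algebra_simps)
  finally show ?case .
qed

lemma ip_v:
  "ip t bw X v = (\<Sum>i=1..t+1. X i * (ws bw v (i-1) - ws bw v i))"
  unfolding ip_def
proof (rule sum.cong)
  fix i assume "i \<in> {1..t+1}"
  then obtain m where "i = Suc m" by (cases i) auto
  then show "real (bw i) * X i * v i = X i * (ws bw v (i - 1) - ws bw v i)"
    by (simp add: ws_Suc)
qed simp

lemma ip_Gamma:
  assumes bpos: "\<forall>i\<in>{1..t+1}. bw i > 0"
  shows "ip t bw X (Gamma_v t bw v) = (\<Sum>i=1..t+1. X i * (wt t bw v (i-1) - wt t bw v i))"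
  unfolding ip_def
proof (rule sum.cong)
  fix i assume "i \<in> {1..t+1}"
  then have "real (bw i) \<noteq> 0" using bpos by auto
  then show "real (bw i) * X i * Gamma_v t bw v i = X i * (wt t bw v (i - 1) - wt t bw v i)"
    unfolding Gamma_v_def by (simp add: field_simps)
qed simp

lemma ip_nonneg: "0 \<le> ip t bw X X"
  unfolding ip_def by (intro sum_nonneg) (simp add: mult.assoc)

lemma ip_pos:
  assumes bpos: "\<forall>i\<in>{1..t+1}. bw i > 0" and nz: "nonzero_vec t X"
  shows "0 < ip t bw X X"
proof -
  obtain i where i: "i \<in> {1..t+1}" "X i \<noteq> 0" using nz unfolding nonzero_vec_def by auto
  have "bw i > 0" using i bpos by auto
  moreover have "X i * X i > 0" using i(2) by (cases "X i > 0") (auto simp: mult_neg_neg)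
  ultimately have "0 < real (bw i) * X i * X i" by (simp add: mult.assoc)
  also have "\<dots> \<le> ip t bw X X" unfolding ip_def
    by (rule member_le_sum) (use i in \<open>auto simp: mult.assoc\<close>)
  finally show ?thesis .
qed

lemma cs:
  assumes a: "wnorm t bw G > 0" and c: "wnorm t bw H > 0"
  shows "ip t bw G H \<le> wnorm t bw G * wnorm t bw H"
proof -
  define a where "a = wnorm t bw G"
  define c where "c = wnorm t bw H"
  have aa: "a * a = ip t bw G G" unfolding a_def wnorm_def using ip_nonneg by simp
  have cc: "c * c = ip t bw H H" unfolding c_def wnorm_def using ip_nonneg by simp
  have "ip t bw G H = ip t bw H G" unfolding ip_def by (simp add: algebra_simps)
  have "0 \<le> ip t bw (\<lambda>i. c * G i - a * H i) (\<lambda>i. c * G i - a * H i)" by (rule ip_nonneg)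
  also have "\<dots> = c * c * ip t bw G G - 2 * a * c * ip t bw G H + a * a * ip t bw H H"
  proof -
    have pw: "real (bw i) * (c * G i - a * H i) * (c * G i - a * H i) =
      c * c * (real (bw i) * G i * G i) - 2 * a * c * (real (bw i) * G i * H i) + a * a * (real (bw i) * H i * H i)" for i
      by (simp add: algebra_simps)
    show ?thesis unfolding ip_def pw
      by (simp only: sum.distrib sum_subtractf sum_distrib_left)
  qed
  also have "\<dots> = 2 * (a * c) * (a * c - ip t bw G H)" unfolding aa[symmetric] cc[symmetric]
    by (simp add: algebra_simps)
  finally have "0 \<le> (a * c) * (a * c - ip t bw G H)" by simp
  moreover have "a * c > 0" using a c unfolding a_def c_def by simp
  ultimately have "0 \<le> a * c - ip t bw G H" by (simp add: zero_le_mult_iff)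
  then show ?thesis unfolding a_def c_def by simp
qed

theorem theorem2p2:
  fixes t :: nat and bw :: "nat \<Rightarrow> nat" and v :: "nat \<Rightarrow> real"
  assumes bpos: "\<forall>i\<in>{1..t+1}. bw i > 0"
    and vnz: "nonzero_vec t v"
    and vsum: "(\<Sum>i=1..t+1. v i * real (bw i)) = 0"
    and pos: "\<exists>G\<in>cone t. nonzero_vec t G \<and> mu t bw v G > 0"
  shows "Gamma_v t bw v \<in> cone t \<and> nonzero_vec t (Gamma_v t bw v) \<and>
         (\<forall>G\<in>cone t. nonzero_vec t G \<longrightarrow> mu t bw v G \<le> mu t bw v (Gamma_v t bw v))"
proof -
  let ?z = "wt t bw v" and ?w = "ws bw v" and ?G = "Gamma_v t bw v"
  have z0: "?z 0 = 0" by (rule wt_0[OF bpos])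
  have w1: "?w (t+1) = 0" unfolding ws_def using vsum by (simp add: mult.commute)
  have z1: "?z (t+1) = 0" using wt_last[OF bpos, of v] w1 by simp
  have Gsl: "?G i = - sl bw ?z i" for i unfolding Gamma_v_def sl_def by (simp only: minus_divide_left)
  have ipv: "ip t bw X v = (\<Sum>i=1..t. ?w i * (X (i+1) - X i))" for X
    unfolding ip_v abel using w1 by simp
  have ipG: "ip t bw X ?G = (\<Sum>i=1..t. ?z i * (X (i+1) - X i))" for X
    unfolding ip_Gamma[OF bpos] abel using z0 z1 by simp
  have cz: "\<forall>j\<in>{1..t}. sl bw ?z (j+1) \<le> sl bw ?z j" by (rule wt_cons[OF bpos])
  have cone: "?G \<in> cone t" unfolding cone_def Gsl using cz by auto
  have le: "ip t bw X v \<le> ip t bw X ?G" if "X \<in> cone t" for X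
    unfolding ipv ipG
  proof (rule sum_mono)
    fix i assume i: "i \<in> {1..t}"
    have "X i \<le> X (i+1)" using that i unfolding cone_def by auto
    moreover have "?w i \<le> ?z i" using ws_le_wt[OF bpos, of i v] i by auto
    ultimately show "?w i * (X (i+1) - X i) \<le> ?z i * (X (i+1) - X i)"
      by (intro mult_right_mono) auto
  qed
  have eqG: "ip t bw ?G v = ip t bw ?G ?G"
    unfolding ipv ipG
  proof (rule sum.cong)
    fix i assume i: "i \<in> {1..t}"
    show "?w i * (?G (i+1) - ?G i) = ?z i * (?G (i+1) - ?G i)"
    proof (cases "sl bw ?z (i+1) < sl bw ?z i")
      case True then show ?thesis using touch[OF bpos i True] by simp
    next
      case False
      then have "sl bw ?z (i+1) = sl bw ?z i" using cz i by (meson antisym not_le)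
      then have "?G (i+1) = ?G i" unfolding Gsl by simp
      then show ?thesis by simp
    qed
  qed simp
  obtain G0 where G0: "G0 \<in> cone t" "nonzero_vec t G0" "mu t bw v G0 > 0" using pos by auto
  have nzG: "nonzero_vec t ?G"
  proof (rule ccontr)
    assume "\<not> nonzero_vec t ?G"
    then have "ip t bw G0 ?G = 0" unfolding nonzero_vec_def ip_def by simp
    moreover have "wnorm t bw G0 \<ge> 0" unfolding wnorm_def using ip_nonneg[of t bw G0] by simp
    ultimately have "mu t bw v G0 \<le> 0" using le[OF G0(1)] unfolding mu_def
      by (simp add: divide_nonpos_nonneg)
    then show False using G0 by simp
  qed
  have nG: "wnorm t bw ?G > 0" unfolding wnorm_def using ip_pos[OF bpos nzG] by simp
  have muG: "mu t bw v ?G = wnorm t bw ?G"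
  proof -
    have "ip t bw ?G ?G = wnorm t bw ?G * wnorm t bw ?G" unfolding wnorm_def using ip_nonneg by simp
    then show ?thesis unfolding mu_def eqG using nG by simp
  qed
  have "mu t bw v G \<le> mu t bw v ?G" if G: "G \<in> cone t" "nonzero_vec t G" for G
  proof -
    have nX: "wnorm t bw G > 0" unfolding wnorm_def using ip_pos[OF bpos G(2)] by simp
    have "mu t bw v G \<le> ip t bw G ?G / wnorm t bw G" unfolding mu_def
      using le[OF G(1)] nX by (simp add: divide_right_mono)
    also have "\<dots> \<le> wnorm t bw G * wnorm t bw ?G / wnorm t bw G"
      by (rule divide_right_mono[OF cs[OF nX nG]]) (use nX in simp)
    also have "\<dots> = mu t bw v ?G" using nX muG by simp
    finally show ?thesis .
  qed
  then show ?thesis using cone nzG by blast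
qed

end
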